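(* Let $(V,E)$ be a finite graph with $E\neq\emptyset$ and let $p\in(0,1)$. Let $(\eta_t,\sigma_t)_{t\ge0}$ be a continuous-time Markov jump process on $\{0,1\}^E\times\{-1,1\}^V$ which updates at most one site or one edge at each time (i.e. its rates $q((\eta,\sigma),(\eta',\sigma'))$ vanish unless $(\eta',\sigma')$ differs from $(\eta,\sigma)$ in at most one spin or at most one edge), and whose spin marginal $(\sigma_t)_{t\ge0}$ is a Markov jump process with transition rates $c(\sigma,\sigma')$ satisfying: $c(\sigma,\sigma')=0$ whenever $\sigma,\sigma'$ differ at two or more vertices, $c(\sigma,\sigma^x)>0$ for all $x\in V$, and $c(\sigma,\sigma)=-\sum_{y\in V}c(\sigma,\sigma^y)$. Then $(\eta_t,\sigma_t)_{t\ge0}$ cannot be reversible with respect to $IP$.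
   Context: Edge configurations $\eta\in\{0,1\}^E$, spin configurations $\sigma\in\{-1,1\}^V$. For $e=\langle x,y\rangle$, $\delta_\sigma(e)=\mathbf 1_{\sigma(x)=\sigma(y)}$. $IP(\eta,\sigma)=\frac1Z\prod_{e\in E}\big(p\mathbf 1_{\eta(e)=1}\delta_\sigma(e)+(1-p)\mathbf 1_{\eta(e)=0}\big)$ with $Z$ the normalizing constant. $\sigma^x$ is $\sigma$ with the spin at $x$ flipped. Reversibility with respect to $IP$ means $IP(a)q(a,b)=IP(b)q(b,a)$ for all states $a,b$. The spin marginal is a Markov jump process with rates $c$ if it is a time-homogeneous Markov process for every initial distribution, with rates $c$ not depending on the initial distribution. *)

theory Defs
  imports "HOL-Analysis.Analysis"
begin

text \<open>A finite simple graph: vertices form the finite type 'v, edges are 2-element vertex sets.\<close>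
definition simple_graph :: "'v set set \<Rightarrow> bool" where
  "simple_graph E \<longleftrightarrow> (\<forall>e\<in>E. \<exists>x y. x \<noteq> y \<and> e = {x, y})"

definition spins :: "('v \<Rightarrow> int) set" where
  "spins = {\<sigma>. \<forall>x. \<sigma> x \<in> {-1, 1}}"

definition flip :: "('v \<Rightarrow> int) \<Rightarrow> 'v \<Rightarrow> ('v \<Rightarrow> int)" where
  "flip \<sigma> x = \<sigma>(x := - \<sigma> x)"

definition delta :: "('v \<Rightarrow> int) \<Rightarrow> 'v set \<Rightarrow> bool" where
  "delta \<sigma> e \<longleftrightarrow> (\<forall>x\<in>e. \<forall>y\<in>e. \<sigma> x = \<sigma> y)"

text \<open>Edge configurations eta in {0,1}^E are represented by the set of open edges (eta(e)=1).
  Joint states: pairs (eta, sigma).\<close>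
definition states :: "'v set set \<Rightarrow> ('v set set \<times> ('v \<Rightarrow> int)) set" where
  "states E = {(\<eta>, \<sigma>). \<eta> \<subseteq> E \<and> \<sigma> \<in> spins}"

definition weight :: "real \<Rightarrow> 'v set set \<Rightarrow> 'v set set \<times> ('v \<Rightarrow> int) \<Rightarrow> real" where
  "weight p E s = (\<Prod>e\<in>E. if e \<in> fst s then (if delta (snd s) e then p else 0) else 1 - p)"

definition IP :: "real \<Rightarrow> 'v set set \<Rightarrow> 'v set set \<times> ('v \<Rightarrow> int) \<Rightarrow> real" where
  "IP p E s = weight p E s / (\<Sum>s'\<in>states E. weight p E s')"

definition rate_matrix :: "'a set \<Rightarrow> ('a \<Rightarrow> 'a \<Rightarrow> real) \<Rightarrow> bool" where
  "rate_matrix S Q \<longleftrightarrow> (\<forall>a\<in>S. \<forall>b\<in>S. a \<noteq> b \<longrightarrow> Q a b \<ge> 0) \<and>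
                        (\<forall>a\<in>S. Q a a = - (\<Sum>b\<in>S - {a}. Q a b))"

fun mpow :: "'a set \<Rightarrow> ('a \<Rightarrow> 'a \<Rightarrow> real) \<Rightarrow> nat \<Rightarrow> 'a \<Rightarrow> 'a \<Rightarrow> real" where
  "mpow S Q 0 a b = (if a = b then 1 else 0)"
| "mpow S Q (Suc n) a b = (\<Sum>c\<in>S. Q a c * mpow S Q n c b)"

definition trans_fun :: "'a set \<Rightarrow> ('a \<Rightarrow> 'a \<Rightarrow> real) \<Rightarrow> real \<Rightarrow> 'a \<Rightarrow> 'a \<Rightarrow> real" where
  "trans_fun S Q t a b = (\<Sum>n. t ^ n / fact n * mpow S Q n a b)"

fun path_prod :: "(real \<Rightarrow> 'a \<Rightarrow> 'a \<Rightarrow> real) \<Rightarrow> 'a \<Rightarrow> real list \<Rightarrow> 'a list \<Rightarrow> real" where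
  "path_prod T a (d # ds) (b # bs) = T d a b * path_prod T b ds bs"
| "path_prod T a _ _ = 1"

text \<open>Finite-dimensional distributions of the Markov jump process with rates Q and initial
  distribution mu: P(X_{t0} = a0, X_{t0+d1} = a1, ..., X_{t0+d1+...+dn} = an).\<close>
definition joint_fdd :: "'a set \<Rightarrow> ('a \<Rightarrow> 'a \<Rightarrow> real) \<Rightarrow> ('a \<Rightarrow> real) \<Rightarrow> real \<Rightarrow> 'a
    \<Rightarrow> real list \<Rightarrow> 'a list \<Rightarrow> real" where
  "joint_fdd S Q \<mu> t0 a0 ds as' =
     (\<Sum>a\<in>S. \<mu> a * trans_fun S Q t0 a a0) * path_prod (trans_fun S Q) a0 ds as'"

definition lumped_fdd :: "'a set \<Rightarrow> ('a \<Rightarrow> 'a \<Rightarrow> real) \<Rightarrow> ('a \<Rightarrow> real) \<Rightarrow> ('a \<Rightarrow> 'b) \<Rightarrow> real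
    \<Rightarrow> 'b \<Rightarrow> real list \<Rightarrow> 'b list \<Rightarrow> real" where
  "lumped_fdd S Q \<mu> f t0 y0 ds ys =
     (\<Sum>a0\<in>{a\<in>S. f a = y0}. \<Sum>as'\<in>{as'. length as' = length ys \<and> set as' \<subseteq> S \<and> map f as' = ys}.
        joint_fdd S Q \<mu> t0 a0 ds as')"

definition distribution_on :: "'a set \<Rightarrow> ('a \<Rightarrow> real) \<Rightarrow> bool" where
  "distribution_on S \<mu> \<longleftrightarrow> (\<forall>a\<in>S. \<mu> a \<ge> 0) \<and> (\<Sum>a\<in>S. \<mu> a) = 1"

text \<open>The image f(X_t) of the Markov jump process with rates Q on S is, for every initial
  distribution, a time-homogeneous Markov jump process on T with rates c (c independent of the
  initial distribution): its finite-dimensional distributions are those of a Markov chain with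
  transition function exp(t c).\<close>
definition marginal_markov :: "'a set \<Rightarrow> ('a \<Rightarrow> 'a \<Rightarrow> real) \<Rightarrow> ('a \<Rightarrow> 'b) \<Rightarrow> 'b set
    \<Rightarrow> ('b \<Rightarrow> 'b \<Rightarrow> real) \<Rightarrow> bool" where
  "marginal_markov S Q f T c \<longleftrightarrow>
     (\<forall>\<mu>. distribution_on S \<mu> \<longrightarrow>
        (\<forall>t0 ds y0 ys. t0 \<ge> 0 \<and> (\<forall>d\<in>set ds. d \<ge> 0) \<and> length ds = length ys \<and>
            y0 \<in> T \<and> set ys \<subseteq> T \<longrightarrow>
          lumped_fdd S Q \<mu> f t0 y0 ds ys =
            lumped_fdd S Q \<mu> f t0 y0 [] [] * path_prod (trans_fun T c) y0 ds ys))"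

definition reversible :: "'a set \<Rightarrow> ('a \<Rightarrow> real) \<Rightarrow> ('a \<Rightarrow> 'a \<Rightarrow> real) \<Rightarrow> bool" where
  "reversible S \<pi> q \<longleftrightarrow> (\<forall>a\<in>S. \<forall>b\<in>S. \<pi> a * q a b = \<pi> b * q b a)"

definition ndiff :: "'v set set \<Rightarrow> 'v set set \<times> ('v \<Rightarrow> int) \<Rightarrow> 'v set set \<times> ('v \<Rightarrow> int) \<Rightarrow> nat" where
  "ndiff E s s' = card {e\<in>E. (e \<in> fst s) \<noteq> (e \<in> fst s')} + card {x. snd s x \<noteq> snd s' x}"

end

theory Submission
  imports Defs
begin

lemma mpow_bound:
  assumes fin: "finite S" and a: "a \<in> S"
  shows "\<bar>mpow S Q n a b\<bar> \<le> (\<Sum>a'\<in>S. \<Sum>c\<in>S. \<bar>Q a' c\<bar>) ^ n"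
  using a
proof (induction n arbitrary: a)
  case 0 then show ?case by simp
next
  case (Suc n)
  define M where "M = (\<Sum>a'\<in>S. \<Sum>c\<in>S. \<bar>Q a' c\<bar>)"
  have M0: "M \<ge> 0" unfolding M_def by (intro sum_nonneg) auto
  have rowle: "(\<Sum>c\<in>S. \<bar>Q a c\<bar>) \<le> M" unfolding M_def
    using Suc.prems fin by (intro member_le_sum[where f="\<lambda>a'. \<Sum>c\<in>S. \<bar>Q a' c\<bar>"]) (auto intro: sum_nonneg)
  have "\<bar>mpow S Q (Suc n) a b\<bar> \<le> (\<Sum>c\<in>S. \<bar>Q a c * mpow S Q n c b\<bar>)"
    by (simp add: sum_abs)
  also have "\<dots> \<le> (\<Sum>c\<in>S. \<bar>Q a c\<bar> * M ^ n)"
    using Suc.IH unfolding M_def by (intro sum_mono) (auto simp: abs_mult intro: mult_left_mono)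
  also have "\<dots> = (\<Sum>c\<in>S. \<bar>Q a c\<bar>) * M ^ n" by (simp add: sum_distrib_right)
  also have "\<dots> \<le> M * M ^ n" using rowle M0 by (intro mult_right_mono) auto
  finally show ?case unfolding M_def by simp
qed

lemma powser_quot_lim:
  fixes \<alpha> :: "nat \<Rightarrow> real"
  assumes summ: "\<And>K. summable (\<lambda>n. \<alpha> n * K ^ n)" and a0: "\<alpha> 0 = 0"
  shows "((\<lambda>d. (\<Sum>n. \<alpha> n * d ^ n) / d) \<longlongrightarrow> \<alpha> 1) (at_right 0)"
proof -
  define g where "g = (\<lambda>d::real. \<Sum>n. \<alpha> (Suc n) * d ^ n)"
  have "isCont g 0" unfolding g_def
    by (rule isCont_powser[OF powser_split_head(3)[OF summ[of 1]]]) simp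
  moreover have "g 0 = \<alpha> 1" unfolding g_def using powser_zero[of "\<lambda>n. \<alpha> (Suc n)"] by simp
  ultimately have "(g \<longlongrightarrow> \<alpha> 1) (at 0)" by (simp add: isCont_def)
  then have "(g \<longlongrightarrow> \<alpha> 1) (at_right 0)" by (rule tendsto_mono[OF at_le, rotated]) simp
  moreover have "eventually (\<lambda>d. g d = (\<Sum>n. \<alpha> n * d ^ n) / d) (at_right 0)"
  proof -
    have "eventually (\<lambda>d::real. d > 0) (at_right 0)" by (simp add: eventually_at_right_less)
    then show ?thesis
    proof (rule eventually_mono)
      fix d :: real assume "d > 0"
      then show "g d = (\<Sum>n. \<alpha> n * d ^ n) / d"
        unfolding g_def using powser_split_head(1)[OF summ[of d]] a0 by simp
    qed
  qed
  ultimately show ?thesis by (rule Lim_transform_eventually)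
qed

lemma trans_fun_series:
  "trans_fun S Q d a b = (\<Sum>n. (mpow S Q n a b / fact n) * d ^ n)"
  unfolding trans_fun_def by (simp add: field_simps)

lemma trans_fun_summ:
  assumes fin: "finite S" and a: "a \<in> S"
  shows "summable (\<lambda>n. (mpow S Q n a b / fact n) * K ^ n)"
proof -
  define M where "M = (\<Sum>a'\<in>S. \<Sum>c\<in>S. \<bar>Q a' c\<bar>)"
  show ?thesis
  proof (rule summable_comparison_test'[OF summable_exp[of "M * \<bar>K\<bar>"]])
    fix n :: nat
    have "norm ((mpow S Q n a b / fact n) * K ^ n) = \<bar>mpow S Q n a b\<bar> * \<bar>K\<bar>^n / fact n"
      by (simp add: abs_mult power_abs)
    also have "\<dots> \<le> M ^ n * \<bar>K\<bar>^n / fact n"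
      using mpow_bound[OF fin a, of Q n b] unfolding M_def
      by (intro divide_right_mono mult_right_mono) auto
    also have "\<dots> = inverse (fact n) * (M * \<bar>K\<bar>) ^ n" by (simp add: power_mult_distrib field_simps)
    finally show "norm ((mpow S Q n a b / fact n) * K ^ n) \<le> inverse (fact n) * (M * \<bar>K\<bar>) ^ n" .
  qed
qed

lemma trans_fun_zero: "trans_fun S Q 0 a b = (if a = b then 1 else 0)"
  unfolding trans_fun_series using powser_zero[of "\<lambda>n. mpow S Q n a b / fact n"] by simp

lemma trans_fun_lim:
  assumes fin: "finite S" and a: "a \<in> S" and ab: "a \<noteq> b"
  shows "((\<lambda>d. trans_fun S Q d a b / d) \<longlongrightarrow> mpow S Q 1 a b) (at_right 0)"
  unfolding trans_fun_series
  using powser_quot_lim[of "\<lambda>n. mpow S Q n a b / fact n", OF trans_fun_summ[OF fin a]] ab by simp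

lemma mpow_one: "b \<in> S \<Longrightarrow> finite S \<Longrightarrow> mpow S Q 1 a b = Q a b"
  by (simp add: if_distrib cong: if_cong)


lemma init_delta:
  assumes "finite S" "a \<in> S"
  shows "(\<Sum>a'\<in>S. (if a' = a then 1 else 0) * trans_fun S Q 0 a' a0) = (if a0 = a then 1 else (0::real))"
  using assms by (simp add: trans_fun_zero if_distrib[where f="\<lambda>x. x * _"] cong: if_cong)

lemma lumped_nil:
  assumes "finite S" "a \<in> S"
  shows "lumped_fdd S Q (\<lambda>x. if x = a then 1 else 0) f 0 (f a) [] [] = 1"
proof -
  have "{as'. length as' = length ([]::'b list) \<and> set as' \<subseteq> S \<and> map f as' = []} = {[]}" by auto
  then show ?thesis unfolding lumped_fdd_def joint_fdd_def using assms
    by (simp add: trans_fun_zero init_delta if_distrib[where f="\<lambda>x. x * _"] cong: if_cong)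
qed

lemma lumped_one:
  assumes fin: "finite S" and a: "a \<in> S"
  shows "lumped_fdd S Q (\<lambda>x. if x = a then 1 else 0) f 0 (f a) [d] [y] = (\<Sum>b\<in>{b\<in>S. f b = y}. trans_fun S Q d a b)"
proof -
  have set_eq: "{as'. length as' = length [y] \<and> set as' \<subseteq> S \<and> map f as' = [y]} = (\<lambda>b. [b]) ` {b\<in>S. f b = y}"
    by (auto simp: length_Suc_conv)
  have inner: "(\<Sum>as'\<in>{as'. length as' = length [y] \<and> set as' \<subseteq> S \<and> map f as' = [y]}. path_prod (trans_fun S Q) a [d] as')
     = (\<Sum>b\<in>{b\<in>S. f b = y}. trans_fun S Q d a b)"
    unfolding set_eq by (subst sum.reindex) (auto simp: inj_on_def)
  have "lumped_fdd S Q (\<lambda>x. if x = a then 1 else 0) f 0 (f a) [d] [y] =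
     (\<Sum>a0\<in>{a'\<in>S. f a' = f a}. (if a0 = a then 1 else 0) * (\<Sum>as'\<in>{as'. length as' = length [y] \<and> set as' \<subseteq> S \<and> map f as' = [y]}. path_prod (trans_fun S Q) a0 [d] as'))"
    unfolding lumped_fdd_def joint_fdd_def using fin a
    by (simp add: init_delta sum_distrib_left)
  also have "\<dots> = (\<Sum>as'\<in>{as'. length as' = length [y] \<and> set as' \<subseteq> S \<and> map f as' = [y]}. path_prod (trans_fun S Q) a [d] as')"
    using fin a by (simp add: if_distrib[where f="\<lambda>x. x * _"] cong: if_cong)
  finally show ?thesis using inner by simp
qed


lemma lump_rate:
  assumes finS: "finite S" and finT: "finite T" and a: "a \<in> S" and fa: "f a \<in> T" and y: "y \<in> T"
    and ne: "f a \<noteq> y" and mm: "marginal_markov S Q f T c"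
  shows "(\<Sum>b\<in>{b\<in>S. f b = y}. Q a b) = c (f a) y"
proof -
  define \<mu> where "\<mu> = (\<lambda>x. if x = a then 1 else (0::real))"
  have dist: "distribution_on S \<mu>" unfolding distribution_on_def \<mu>_def using finS a by simp
  have eq: "(\<Sum>b\<in>{b\<in>S. f b = y}. trans_fun S Q d a b) = trans_fun T c d (f a) y" if "d \<ge> 0" for d
  proof -
    have "lumped_fdd S Q \<mu> f 0 (f a) [d] [y] = lumped_fdd S Q \<mu> f 0 (f a) [] [] * path_prod (trans_fun T c) (f a) [d] [y]"
    proof -
      have "\<forall>t0 ds y0 ys. t0 \<ge> 0 \<and> (\<forall>d\<in>set ds. d \<ge> 0) \<and> length ds = length ys \<and>
            y0 \<in> T \<and> set ys \<subseteq> T \<longrightarrow>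
          lumped_fdd S Q \<mu> f t0 y0 ds ys =
            lumped_fdd S Q \<mu> f t0 y0 [] [] * path_prod (trans_fun T c) y0 ds ys"
        using mm dist unfolding marginal_markov_def by blast
      from this[THEN spec[of _ 0], THEN spec[of _ "[d]"], THEN spec[of _ "f a"], THEN spec[of _ "[y]"]] show ?thesis using that fa y by simp
    qed
    then show ?thesis unfolding \<mu>_def by (simp add: lumped_one[OF finS a] lumped_nil[OF finS a])
  qed
  have finB: "finite {b\<in>S. f b = y}" using finS by simp
  have L1: "((\<lambda>d. (\<Sum>b\<in>{b\<in>S. f b = y}. trans_fun S Q d a b / d)) \<longlongrightarrow> (\<Sum>b\<in>{b\<in>S. f b = y}. mpow S Q 1 a b)) (at_right 0)"
    by (intro tendsto_sum trans_fun_lim[OF finS a]) (use ne in blast)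
  have L1': "((\<lambda>d. (\<Sum>b\<in>{b\<in>S. f b = y}. trans_fun S Q d a b / d)) \<longlongrightarrow> (\<Sum>b\<in>{b\<in>S. f b = y}. Q a b)) (at_right 0)"
  proof -
    have "(\<Sum>b\<in>{b\<in>S. f b = y}. mpow S Q 1 a b) = (\<Sum>b\<in>{b\<in>S. f b = y}. Q a b)"
      by (intro sum.cong refl mpow_one finS) blast
    then show ?thesis using L1 by simp
  qed
  have L2: "((\<lambda>d. trans_fun T c d (f a) y / d) \<longlongrightarrow> c (f a) y) (at_right 0)"
    using trans_fun_lim[OF finT fa ne, of c] unfolding mpow_one[OF y finT] .
  have ev: "eventually (\<lambda>d. trans_fun T c d (f a) y / d = (\<Sum>b\<in>{b\<in>S. f b = y}. trans_fun S Q d a b / d)) (at_right 0)"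
  proof -
    have "eventually (\<lambda>d::real. d > 0) (at_right 0)" by (simp add: eventually_at_right_less)
    then show ?thesis
    proof (rule eventually_mono)
      fix d :: real assume "d > 0"
      then show "trans_fun T c d (f a) y / d = (\<Sum>b\<in>{b\<in>S. f b = y}. trans_fun S Q d a b / d)"
        unfolding sum_divide_distrib[symmetric] using eq[of d] by simp
    qed
  qed
  have "((\<lambda>d. (\<Sum>b\<in>{b\<in>S. f b = y}. trans_fun S Q d a b / d)) \<longlongrightarrow> c (f a) y) (at_right 0)"
    by (rule Lim_transform_eventually[OF L2 ev])
  from tendsto_unique[OF _ L1' this] show ?thesis by simp
qed


theorem theorem2:
  fixes E :: "('v::finite) set set"
    and p :: real
    and q :: "'v set set \<times> ('v \<Rightarrow> int) \<Rightarrow> 'v set set \<times> ('v \<Rightarrow> int) \<Rightarrow> real"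
    and c :: "('v \<Rightarrow> int) \<Rightarrow> ('v \<Rightarrow> int) \<Rightarrow> real"
  assumes graph: "simple_graph E"
    and nonempty: "E \<noteq> {}"
    and p: "0 < p" "p < 1"
    and q_rates: "rate_matrix (states E) q"
    and q_local: "\<forall>s\<in>states E. \<forall>s'\<in>states E. ndiff E s s' > 1 \<longrightarrow> q s s' = 0"
    and c_zero: "\<forall>\<sigma>\<in>spins. \<forall>\<sigma>'\<in>spins. card {x. \<sigma> x \<noteq> \<sigma>' x} \<ge> 2 \<longrightarrow> c \<sigma> \<sigma>' = 0"
    and c_pos: "\<forall>\<sigma>\<in>spins. \<forall>x. c \<sigma> (flip \<sigma> x) > 0"
    and c_diag: "\<forall>\<sigma>\<in>spins. c \<sigma> \<sigma> = - (\<Sum>y\<in>UNIV. c \<sigma> (flip \<sigma> y))"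
    and marginal: "marginal_markov (states E) q snd spins c"
  shows "\<not> reversible (states E) (IP p E) q"
proof
  assume rev: "reversible (states E) (IP p E) q"
  have finE: "finite E" by (rule finite_subset[OF subset_UNIV]) simp
  have finsp: "finite (spins :: ('v \<Rightarrow> int) set)"
  proof (rule finite_subset)
    show "spins \<subseteq> PiE UNIV (\<lambda>_. {-1, 1::int})" by (auto simp: spins_def PiE_def)
  qed (auto intro: finite_PiE)
  have finS: "finite (states E)"
  proof (rule finite_subset)
    show "states E \<subseteq> Pow E \<times> spins" by (auto simp: states_def)
  qed (use finE finsp in auto)
  obtain e where eE: "e \<in> E" using nonempty by auto
  then obtain x y where xy: "x \<noteq> y" "e = {x, y}" using graph unfolding simple_graph_def by blast
  define \<sigma> where "\<sigma> = (\<lambda>_::'v. 1::int)"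
  define \<tau> where "\<tau> = flip \<sigma> x"
  define \<eta> where "\<eta> = {e}"
  define a where "a = (\<eta>, \<sigma>)"
  define a' where "a' = (\<eta>, \<tau>)"
  have \<sigma>sp: "\<sigma> \<in> spins" by (simp add: \<sigma>_def spins_def)
  have \<tau>sp: "\<tau> \<in> spins" by (simp add: \<tau>_def \<sigma>_def spins_def flip_def)
  have aS: "a \<in> states E" using eE \<sigma>sp by (simp add: a_def \<eta>_def states_def)
  have a'S: "a' \<in> states E" using eE \<tau>sp by (simp add: a'_def \<eta>_def states_def)
  have ne: "\<sigma> \<noteq> \<tau>"
  proof
    assume "\<sigma> = \<tau>" then have "\<sigma> x = \<tau> x" by simp
    then show False by (simp add: \<sigma>_def \<tau>_def flip_def)
  qed
  have lump: "(\<Sum>b\<in>{b\<in>states E. snd b = \<tau>}. q a b) = c \<sigma> \<tau>"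
    using lump_rate[OF finS finsp aS _ \<tau>sp _ marginal] \<sigma>sp ne by (simp add: a_def)
  have cpos: "c \<sigma> \<tau> > 0" using c_pos \<sigma>sp by (simp add: \<tau>_def)
  have zero: "q a b = 0" if b: "b \<in> {b\<in>states E. snd b = \<tau>} - {a'}" for b
  proof -
    obtain \<eta>' where b': "b = (\<eta>', \<tau>)" "\<eta>' \<subseteq> E" using b by (cases b) (auto simp: states_def)
    have "\<eta>' \<noteq> \<eta>" using b b' by (auto simp: a'_def)
    then obtain e' where e': "e' \<in> E" "(e' \<in> \<eta>) \<noteq> (e' \<in> \<eta>')" using b'(2) eE \<eta>_def by blast
    have c1: "card {e\<in>E. (e \<in> fst a) \<noteq> (e \<in> fst b)} \<ge> 1"
    proof -
      have "finite {e\<in>E. (e \<in> fst a) \<noteq> (e \<in> fst b)}" using finE by simp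
      moreover have "e' \<in> {e\<in>E. (e \<in> fst a) \<noteq> (e \<in> fst b)}" using e' b' by (simp add: a_def)
      ultimately show ?thesis by (metis One_nat_def Suc_leI card_gt_0_iff empty_iff)
    qed
    have c2: "card {z. snd a z \<noteq> snd b z} \<ge> 1"
    proof -
      have "finite {z. snd a z \<noteq> snd b z}" by simp
      moreover have "x \<in> {z. snd a z \<noteq> snd b z}" using b' by (simp add: a_def \<sigma>_def \<tau>_def flip_def)
      ultimately show ?thesis by (metis One_nat_def Suc_leI card_gt_0_iff empty_iff)
    qed
    have "ndiff E a b > 1" unfolding ndiff_def using c1 c2 by simp
    then show ?thesis using q_local aS b by auto
  qed
  have "(\<Sum>b\<in>{b\<in>states E. snd b = \<tau>}. q a b) = q a a' + (\<Sum>b\<in>{b\<in>states E. snd b = \<tau>} - {a'}. q a b)"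
    using a'S finS by (intro sum.remove) (auto simp: a'_def)
  also have "(\<Sum>b\<in>{b\<in>states E. snd b = \<tau>} - {a'}. q a b) = 0" using zero by (intro sum.neutral) blast
  finally have qpos: "q a a' > 0" using lump cpos by simp
  have fac_nonneg: "\<And>s e. 0 \<le> (if e \<in> fst s then (if delta (snd s) e then p else 0) else 1 - p)"
    using p by auto
  have wnn: "\<And>s. weight p E s \<ge> 0" unfolding weight_def by (intro prod_nonneg) (use p in auto)
  have wa: "weight p E a > 0" unfolding weight_def
    by (intro prod_pos) (use p in \<open>auto simp: a_def \<sigma>_def delta_def\<close>)
  have wa': "weight p E a' = 0" unfolding weight_def
  proof (rule prod_zero[OF finE])
    have "\<not> delta \<tau> e" using xy by (auto simp: delta_def \<tau>_def \<sigma>_def flip_def)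
    then show "\<exists>e'\<in>E. (if e' \<in> fst a' then (if delta (snd a') e' then p else 0) else 1 - p) = 0"
      using eE by (auto simp: a'_def \<eta>_def)
  qed
  have Z: "(\<Sum>s'\<in>states E. weight p E s') > 0"
  proof -
    have "weight p E a \<le> (\<Sum>s'\<in>states E. weight p E s')"
      using finS aS wnn by (intro member_le_sum) auto
    then show ?thesis using wa by simp
  qed
  have IPa: "IP p E a > 0" unfolding IP_def using wa Z by simp
  have IPa': "IP p E a' = 0" unfolding IP_def using wa' by simp
  have "IP p E a * q a a' = IP p E a' * q a' a" using rev aS a'S unfolding reversible_def by blast
  then have "IP p E a * q a a' = 0" using IPa' by simp
  then show False using IPa qpos by simp
qed

end
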